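(* Let $x\in\mathbb{R}\setminus\{0\}$ and let $n,r$ be positive integers. Then \begin{enumerate} \item $\displaystyle\sum_{i=0}^{n}\frac{r}{r+i}(-1)^i\binom{n}{i}x^{r+i}=-\left(\sum_{i=1}^{r}x^{r-i}(1-x)^{n+i}\frac{P_i^{r}}{P_i^{n+i}}\right)+\frac{1}{\binom{n+r}{r}}$; \item $\displaystyle\sum_{i=0}^{n}\frac{r}{r+i}\binom{n}{i}x^{r+i}=\left(\sum_{i=1}^{r}(-1)^{i-1}x^{r-i}(1+x)^{n+i}\frac{P_i^{r}}{P_i^{n+i}}\right)+\frac{(-1)^r}{\binom{n+r}{r}}$. \end{enumerate}
   Context: For nonnegative integers $m$ and $i$, $P_i^{m}=m(m-1)\cdots(m-i+1)=\frac{m!}{(m-i)!}$ denotes the number of $i$-permutations of $m$ objects (falling factorial; $P_i^m=0$ if $i>m$). *)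

theory Defs
  imports Complex_Main
begin

definition perm_count :: "nat \<Rightarrow> nat \<Rightarrow> nat" where
  "perm_count i m = (if i \<le> m then fact m div fact (m - i) else 0)"

end

theory Submission
  imports Defs
begin

lemma pc: "i \<le> m \<Longrightarrow> real (perm_count i m) = fact m / fact (m - i)"
  unfolding perm_count_def
  by (simp add: real_of_nat_div fact_dvd)

definition cc :: "nat \<Rightarrow> nat \<Rightarrow> nat \<Rightarrow> real" where
  "cc n r i = fact r * fact n / (fact (r - i) * fact (n + i))"

lemma cc_eq: "i \<le> r \<Longrightarrow> real (perm_count i r) / real (perm_count i (n + i)) = cc n r i"
  by (simp add: pc cc_def field_simps)

lemma cc_rec: assumes "1 \<le> i" "i \<le> r"
  shows "cc n r i * real (n + i) = cc n r (i - 1) * real (r - i + 1)"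
proof -
  obtain j where j: "i = Suc j" using assms by (cases i) auto
  have a: "(fact (n + Suc j) :: real) = real (n + Suc j) * fact (n + j)" by simp
  have b: "(fact (r - j) :: real) = real (r - Suc j + 1) * fact (r - Suc j)"
    using j assms by (metis Suc_diff_Suc Suc_eq_plus1 Suc_le_lessD fact_Suc of_nat_Suc)
  have p1: "real (n + Suc j) > 0" "real (r - Suc j + 1) > 0" by auto
  show ?thesis unfolding cc_def j diff_Suc_1 a b using p1
    by (simp add: field_simps del: of_nat_Suc of_nat_add)
qed

lemma cc_r: "cc n r r = 1 / real ((n + r) choose r)"
  by (simp add: cc_def binomial_fact field_simps)

lemma cc_0: "cc n r 0 = 1"
  by (simp add: cc_def)


lemma d1: "((\<lambda>y::real. (1 - y) ^ k) has_real_derivative (- (real k * (1 - y) ^ (k - 1)))) (at y)"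
  by (rule DERIV_cong[OF DERIV_power[OF DERIV_diff[OF DERIV_const DERIV_ident]]]) simp

lemma part1:
  fixes x :: real
  assumes "r > 0"
  shows "(\<Sum>i=0..n. (real r / real (r + i)) * (-1) ^ i * real (n choose i) * x ^ (r + i))
    = - (\<Sum>i=1..r. x ^ (r - i) * (1 - x) ^ (n + i) * cc n r i) + 1 / real ((n + r) choose r)"
proof -
  define L where "L y = (\<Sum>i=0..n. (real r / real (r + i)) * (-1) ^ i * real (n choose i) * y ^ (r + i))" for y :: real
  define R where "R y = (\<Sum>i=1..r. y ^ (r - i) * (1 - y) ^ (n + i) * cc n r i)" for y :: real
  define u where "u y i = cc n r i * real (r - i) * y ^ (r - i - 1) * (1 - y) ^ (n + i)" for y :: real and i
  have dL: "(L has_real_derivative (real r * y ^ (r - 1) * (1 - y) ^ n)) (at y)" for y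
  proof -
    have "(L has_real_derivative (\<Sum>i=0..n. (real r / real (r + i)) * (-1) ^ i * real (n choose i) * (real (r + i) * y ^ (r + i - 1)))) (at y)"
      unfolding L_def
      by (intro DERIV_sum derivative_eq_intros) auto
    also have "(\<Sum>i=0..n. (real r / real (r + i)) * (-1) ^ i * real (n choose i) * (real (r + i) * y ^ (r + i - 1)))
       = (\<Sum>i=0..n. real r * y ^ (r - 1) * (real (n choose i) * (- y) ^ i * 1 ^ (n - i)))"
    proof (rule sum.cong[OF refl])
      fix i assume "i \<in> {0..n}"
      have ri: "r + i - 1 = (r - 1) + i" using assms by simp
      have A: "y ^ (r + i - 1) = y ^ (r - 1) * y ^ i" unfolding ri by (rule power_add)
      have B: "(- y) ^ i = (-1) ^ i * y ^ i" by (rule power_minus)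
      have "real (r + i) > 0" using assms by simp
      then have e: "real r / real (r + i) * real (r + i) = real r" by simp
      have "(real r / real (r + i)) * (-1) ^ i * real (n choose i) * (real (r + i) * y ^ (r + i - 1))
         = (real r / real (r + i) * real (r + i)) * ((-1) ^ i * real (n choose i) * (y ^ (r - 1) * y ^ i))"
        unfolding A by (simp only: mult_ac)
      also have "\<dots> = real r * y ^ (r - 1) * (real (n choose i) * ((-1) ^ i * y ^ i))"
        unfolding e by (simp only: mult_ac)
      also have "\<dots> = real r * y ^ (r - 1) * (real (n choose i) * (- y) ^ i * 1 ^ (n - i))"
        by (simp only: B[symmetric] power_one mult_1_right)
      finally show "(real r / real (r + i)) * (-1) ^ i * real (n choose i) * (real (r + i) * y ^ (r + i - 1))
         = real r * y ^ (r - 1) * (real (n choose i) * (- y) ^ i * 1 ^ (n - i))" .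
    qed
    also have "\<dots> = real r * y ^ (r - 1) * (\<Sum>i=0..n. real (n choose i) * (- y) ^ i * 1 ^ (n - i))"
      by (simp only: sum_distrib_left)
    also have "(\<Sum>i=0..n. real (n choose i) * (- y) ^ i * 1 ^ (n - i)) = (1 - y) ^ n"
    proof -
      have "(- y + 1) ^ n = (\<Sum>k\<le>n. of_nat (n choose k) * (- y) ^ k * 1 ^ (n - k))"
        by (rule binomial_ring)
      then show ?thesis by (simp add: atLeast0AtMost)
    qed
    finally show ?thesis .
  qed
  have dR: "(R has_real_derivative (\<Sum>i=1..r. u y i - u y (i - 1))) (at y)" for y
    unfolding R_def
  proof (rule DERIV_sum)
    fix i assume i: "i \<in> {1..r}"
    have "((\<lambda>y. y ^ (r - i) * (1 - y) ^ (n + i) * cc n r i) has_real_derivative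
       (real (r - i) * y ^ (r - i - 1) * (1 - y) ^ (n + i) - y ^ (r - i) * (real (n + i) * (1 - y) ^ (n + i - 1))) * cc n r i) (at y)"
      by (rule DERIV_cong[OF DERIV_cmult_right[OF DERIV_mult[OF DERIV_pow d1]]]) (simp add: algebra_simps)
    moreover have EQ: "(real (r - i) * y ^ (r - i - 1) * (1 - y) ^ (n + i) - y ^ (r - i) * (real (n + i) * (1 - y) ^ (n + i - 1))) * cc n r i
       = u y i - u y (i - 1)"
    proof -
      have e1: "r - (i - 1) = r - i + 1" "r - (i - 1) - 1 = r - i" "n + (i - 1) = n + i - 1" "r - i + 1 - 1 = r - i" using i by auto
      have H: "cc n r i * real (n + i) = cc n r (i - 1) * real (r - i + 1)" using i cc_rec by auto
      define P where "P = y ^ (r - i) * (1 - y) ^ (n + i - 1)"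
      have "u y (i - 1) = (cc n r (i - 1) * real (r - i + 1)) * P"
        unfolding u_def e1 P_def by (simp only: mult_ac)
      also have "\<dots> = cc n r i * real (n + i) * P" by (simp only: H)
      finally have U: "u y (i - 1) = cc n r i * real (n + i) * P" .
      show ?thesis unfolding U unfolding P_def u_def by (simp only: left_diff_distrib right_diff_distrib mult_ac)
    qed
    ultimately show "((\<lambda>y. y ^ (r - i) * (1 - y) ^ (n + i) * cc n r i) has_real_derivative (u y i - u y (i - 1))) (at y)"
      by (simp only: EQ)
  qed
  have tel: "(\<Sum>i=1..r. u y i - u y (i - 1)) = - (real r * y ^ (r - 1) * (1 - y) ^ n)" for y
  proof -
    obtain r' where r': "r = Suc r'" using assms by (cases r) auto
    have "(\<Sum>i=1..r. u y i - u y (i - 1)) = (\<Sum>i=0..r'. u y (Suc i) - u y i)"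
      unfolding r' One_nat_def sum.shift_bounds_cl_Suc_ivl by simp
    also have "\<dots> = u y r - u y 0" using sum_Suc_diff[of 0 r' "u y"] r' by simp
    finally show ?thesis by (simp add: u_def cc_0)
  qed
  define f where "f y = L y + R y" for y
  have "\<forall>y. DERIV f y :> 0"
  proof
    fix y
    have D: "DERIV f y :> real r * y ^ (r - 1) * (1 - y) ^ n + (\<Sum>i=1..r. u y i - u y (i - 1))"
      unfolding f_def[abs_def] by (intro DERIV_add dL dR)
    have Z: "real r * y ^ (r - 1) * (1 - y) ^ n + (\<Sum>i=1..r. u y i - u y (i - 1)) = 0"
      unfolding tel by (rule add.right_inverse)
    show "DERIV f y :> 0" by (rule DERIV_cong[OF D Z])
  qed
  then have "f x = f 0" by (rule DERIV_isconst_all)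
  moreover have "L 0 = 0" unfolding L_def using assms by (intro sum.neutral ballI) (simp add: power_0_left)
  moreover have "R 0 = cc n r r"
  proof -
    have "R 0 = (\<Sum>i=1..r. (if i = r then cc n r r else 0))"
      unfolding R_def by (rule sum.cong[OF refl]) auto
    also have "\<dots> = cc n r r" using assms by simp
    finally show ?thesis .
  qed
  ultimately show ?thesis unfolding f_def L_def[symmetric] R_def[symmetric] cc_r by simp
qed


lemma sq: "(-1::real) ^ k * (-1) ^ k = 1"
  by (induct k) auto

lemma cc_sum: "(\<Sum>i=1..r. f i * (real (perm_count i r) / real (perm_count i (n + i))))
   = (\<Sum>i=1..r. f i * cc n r i)"
  by (rule sum.cong[OF refl]) (simp add: cc_eq)

lemma part2:
  fixes x :: real
  assumes "r > 0"
  shows "(\<Sum>i=0..n. (real r / real (r + i)) * real (n choose i) * x ^ (r + i))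
    = (\<Sum>i=1..r. (-1) ^ (i - 1) * x ^ (r - i) * (1 + x) ^ (n + i) * cc n r i) + (-1) ^ r / real ((n + r) choose r)"
proof -
  define S2L where "S2L = (\<Sum>i=0..n. (real r / real (r + i)) * real (n choose i) * x ^ (r + i))"
  define S2R where "S2R = (\<Sum>i=1..r. (-1) ^ (i - 1) * x ^ (r - i) * (1 + x) ^ (n + i) * cc n r i)"
  define C where "C = 1 / real ((n + r) choose r)"
  have P: "(\<Sum>i=0..n. (real r / real (r + i)) * (-1) ^ i * real (n choose i) * (-x) ^ (r + i))
    = - (\<Sum>i=1..r. (-x) ^ (r - i) * (1 - (-x)) ^ (n + i) * cc n r i) + C"
    unfolding C_def by (rule part1[OF assms])
  have h1: "(\<Sum>i=0..n. (real r / real (r + i)) * (-1) ^ i * real (n choose i) * (-x) ^ (r + i)) = (-1) ^ r * S2L"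
    unfolding S2L_def sum_distrib_left
  proof (rule sum.cong[OF refl])
    fix i
    have a: "(-x) ^ (r + i) = (-1) ^ r * (-1) ^ i * x ^ (r + i)"
      by (simp only: power_minus[of x] power_add mult_ac)
    show "(real r / real (r + i)) * (-1) ^ i * real (n choose i) * (-x) ^ (r + i)
      = (-1) ^ r * ((real r / real (r + i)) * real (n choose i) * x ^ (r + i))"
      unfolding a using sq[of i] by (simp add: algebra_simps)
  qed
  have h2: "- (\<Sum>i=1..r. (-x) ^ (r - i) * (1 - (-x)) ^ (n + i) * cc n r i) = (-1) ^ r * S2R"
    unfolding S2R_def sum_distrib_left sum_negf[symmetric]
  proof (rule sum.cong[OF refl])
    fix i assume i: "i \<in> {1..r}"
    have rr: "r = (r - i) + (i - 1) + 1" using i by auto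
    have a: "(-x) ^ (r - i) = (-1) ^ (r - i) * x ^ (r - i)" by (rule power_minus)
    have b: "(-1::real) ^ r = (-1) ^ (r - i) * (-1) ^ (i - 1) * (-1)"
      by (subst rr) (simp only: power_add power_one_right)
    have e: "1 - - x = 1 + x" by simp
    show "- ((-x) ^ (r - i) * (1 - (-x)) ^ (n + i) * cc n r i)
      = (-1) ^ r * ((-1) ^ (i - 1) * x ^ (r - i) * (1 + x) ^ (n + i) * cc n r i)"
      unfolding a b e using sq[of "i - 1"] by (simp add: algebra_simps)
  qed
  have "(-1) ^ r * S2L = (-1) ^ r * S2R + C" using P h1 h2 by simp
  then have "(-1) ^ r * ((-1) ^ r * S2L) = (-1) ^ r * ((-1) ^ r * S2R + C)" by simp
  then have "S2L = S2R + (-1) ^ r * C" using sq[of r] by (simp add: algebra_simps)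
  then show ?thesis unfolding S2L_def S2R_def C_def by simp
qed

theorem mainTheorem7:
  fixes x :: real and n r :: nat
  assumes "x \<noteq> 0" and "n > 0" and "r > 0"
  shows "((\<Sum>i=0..n. (real r / real (r + i)) * (-1) ^ i * real (n choose i) * x ^ (r + i))
           = - (\<Sum>i=1..r. x ^ (r - i) * (1 - x) ^ (n + i) *
                  (real (perm_count i r) / real (perm_count i (n + i))))
             + 1 / real ((n + r) choose r)) \<and>
         ((\<Sum>i=0..n. (real r / real (r + i)) * real (n choose i) * x ^ (r + i))
           = (\<Sum>i=1..r. (-1) ^ (i - 1) * x ^ (r - i) * (1 + x) ^ (n + i) *
                  (real (perm_count i r) / real (perm_count i (n + i))))
             + (-1) ^ r / real ((n + r) choose r))"
  unfolding cc_sum using part1[OF assms(3)] part2[OF assms(3)] by blast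

end
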